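(* Let $p\geq 2$ be an integer, $r=\lceil\log_2(p-1)\rceil$ and $N_r=\binom{\lceil r/2\rceil+1}{2}+\binom{\lfloor r/2\rfloor+1}{2}$. For every integer $0\leq q\leq p-1$ and every integer $m\geq 2N_r+2$, $$\mathrm{forb}(m,3,F(p-q,p,p,p-q))\geq \mathrm{forb}(m,3,p\cdot K_2)-qN_r.$$
   Context: An $s$-matrix has entries in $\{0,\dots,s-1\}$; simple means no repeated columns. $F\prec A$ means some submatrix of $A$ is a row/column permutation of $F$. $\mathrm{forb}(m,s,F)$ is the maximum number of columns of an $m$-rowed simple $s$-matrix $A$ with $F\not\prec A$. $F(a,b,c,d)$ is the 2-rowed $(0,1)$-matrix with $a$ columns $\binom00$, $b$ columns $\binom10$, $c$ columns $\binom01$, $d$ columns $\binom11$. $K_2$ is the $2\times4$ matrix of all $(0,1)$-columns of length 2 and $p\cdot K_2$ the concatenation of $p$ copies of it. *)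

theory Defs
  imports Complex_Main
begin

text \<open>A matrix is represented as the list of its columns; each column is a list
  of entries (row 0 first). An m-rowed s-matrix: every column has length m and
  all entries lie in {0,...,s-1}.\<close>

type_synonym mat = "nat list list"

definition is_smatrix :: "nat \<Rightarrow> nat \<Rightarrow> mat \<Rightarrow> bool" where
  "is_smatrix m s A \<longleftrightarrow> (\<forall>c\<in>set A. length c = m \<and> (\<forall>x\<in>set c. x < s))"

definition simple :: "mat \<Rightarrow> bool" where
  "simple A \<longleftrightarrow> distinct A"

definition config :: "nat \<Rightarrow> nat \<Rightarrow> mat \<Rightarrow> mat \<Rightarrow> bool" where
  "config k m F A \<longleftrightarrow>
     (\<exists>\<sigma> \<tau>. inj_on \<sigma> {..<k} \<and> (\<forall>i<k. \<sigma> i < m) \<and>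
            inj_on \<tau> {..<length F} \<and> (\<forall>j<length F. \<tau> j < length A) \<and>
            (\<forall>i<k. \<forall>j<length F. F ! j ! i = A ! (\<tau> j) ! (\<sigma> i)))"

definition forb :: "nat \<Rightarrow> nat \<Rightarrow> nat \<Rightarrow> mat \<Rightarrow> nat" where
  "forb m s k F = Max {length A | A. is_smatrix m s A \<and> simple A \<and> \<not> config k m F A}"

definition Fmat :: "nat \<Rightarrow> nat \<Rightarrow> nat \<Rightarrow> nat \<Rightarrow> mat" where
  "Fmat a b c d = replicate a [0,0] @ replicate b [1,0] @ replicate c [0,1] @ replicate d [1,1]"

definition K2 :: mat where
  "K2 = [[0,0],[1,0],[0,1],[1,1]]"

definition copiesK2 :: "nat \<Rightarrow> mat" where
  "copiesK2 p = concat (replicate p K2)"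

end

theory Submission
  imports Defs
begin

definition colok :: "nat \<Rightarrow> nat set \<Rightarrow> nat list \<Rightarrow> bool" where
  "colok m Z c \<longleftrightarrow> length c = m \<and> (\<forall>k<m. (k\<in>Z \<longrightarrow> c!k < 2) \<and> (k\<notin>Z \<longrightarrow> c!k = 2))"

lemma sauer:
  fixes Z :: "nat set"
  assumes "finite Z"
  shows "finite V \<Longrightarrow> (\<forall>c\<in>V. colok m Z c) \<Longrightarrow> Z \<subseteq> {..<m} \<Longrightarrow>
    (\<forall>i\<in>Z. \<forall>j\<in>Z. i\<noteq>j \<longrightarrow> (\<exists>x<2. \<exists>y<2. \<forall>c\<in>V. \<not>(c!i = x \<and> c!j = y))) \<Longrightarrow> card V \<le> card Z + 1"
  using assms
proof (induction Z arbitrary: V rule: finite_induct)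
  case empty
  have "V \<subseteq> {replicate m 2}"
  proof
    fix c assume "c \<in> V"
    then have "colok m {} c" using empty by auto
    then have "c = replicate m 2" unfolding colok_def by (auto intro: nth_equalityI)
    then show "c \<in> {replicate m 2}" by simp
  qed
  then have "card V \<le> card {replicate m (2::nat)}" by (intro card_mono) auto
  then show ?case by simp
next
  case (insert z Z)
  define h where "h = (\<lambda>c::nat list. c[z:=2])"
  define V0 where "V0 = {c\<in>V. c!z = 0}"
  define V1 where "V1 = {c\<in>V. c!z = 1}"
  have zm: "z < m" using insert by auto
  have okV: "\<And>c. c \<in> V \<Longrightarrow> colok m (insert z Z) c" using insert by auto
  have VU: "V = V0 \<union> V1"
  proof -
    have "\<And>c. c \<in> V \<Longrightarrow> c!z < 2" using okV zm unfolding colok_def by auto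
    then show ?thesis unfolding V0_def V1_def by force
  qed
  have fin0: "finite V0" "finite V1" using insert.prems(1) unfolding V0_def V1_def by auto
  have cardV: "card V = card V0 + card V1"
    unfolding VU by (rule card_Un_disjoint) (use fin0 in \<open>auto simp: V0_def V1_def\<close>)
  have rec: "\<And>c b. c \<in> V \<Longrightarrow> c!z = b \<Longrightarrow> c = (h c)[z:=b]"
    unfolding h_def by auto
  have inj0: "inj_on h V0"
  proof (rule inj_onI)
    fix c c' assume "c \<in> V0" "c' \<in> V0" "h c = h c'"
    then show "c = c'" using rec[of c 0] rec[of c' 0] by (simp add: V0_def)
  qed
  have inj1: "inj_on h V1"
  proof (rule inj_onI)
    fix c c' assume "c \<in> V1" "c' \<in> V1" "h c = h c'"
    then show "c = c'" using rec[of c 1] rec[of c' 1] by (simp add: V1_def)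
  qed
  define W where "W = h ` V"
  have okW: "\<forall>w\<in>W. colok m Z w"
  proof
    fix w assume "w \<in> W"
    then obtain c where c: "c \<in> V" "w = c[z:=2]" unfolding W_def h_def by auto
    have "colok m (insert z Z) c" using okV c by auto
    then have lc: "length c = m" and cc: "\<forall>k<m. (k\<in>insert z Z \<longrightarrow> c!k < 2) \<and> (k\<notin>insert z Z \<longrightarrow> c!k = 2)"
      unfolding colok_def by auto
    have wk: "\<And>k. k < m \<Longrightarrow> w!k = (if k = z then 2 else c!k)" using c(2) lc by (simp add: nth_list_update)
    show "colok m Z w" unfolding colok_def
    proof (intro conjI allI impI)
      show "length w = m" using c(2) lc by simp
    next
      fix k assume "k < m" "k \<in> Z" then show "w!k < 2" using wk cc insert.hyps(2) by (metis insertCI)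
    next
      fix k assume "k < m" "k \<notin> Z" then show "w!k = 2" using wk cc by (metis insertE)
    qed
  qed
  have hypW: "\<forall>i\<in>Z. \<forall>j\<in>Z. i\<noteq>j \<longrightarrow> (\<exists>x<2. \<exists>y<2. \<forall>c\<in>W. \<not>(c!i = x \<and> c!j = y))"
  proof (intro ballI impI)
    fix i j assume ij: "i \<in> Z" "j \<in> Z" "i \<noteq> j"
    then obtain x y where xy: "x<2" "y<2" "\<forall>c\<in>V. \<not>(c!i = x \<and> c!j = y)" using insert.prems(4) by blast
    have "i \<noteq> z" "j \<noteq> z" using ij insert.hyps(2) by auto
    then have "\<forall>c\<in>W. \<not>(c!i = x \<and> c!j = y)" using xy(3) unfolding W_def h_def by auto
    then show "\<exists>x<2. \<exists>y<2. \<forall>c\<in>W. \<not>(c!i = x \<and> c!j = y)" using xy by blast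
  qed
  have IH: "card W \<le> card Z + 1"
    using insert.IH[of W] okW hypW insert.prems(1,3) unfolding W_def by auto
  have WU: "W = h ` V0 \<union> h ` V1" unfolding W_def VU by auto
  have fI: "finite (h ` V0 \<inter> h ` V1)" using fin0 by auto
  have I1: "card (h ` V0 \<inter> h ` V1) \<le> Suc 0"
  proof (subst card_le_Suc0_iff_eq[OF fI], intro ballI, rule ccontr)
    fix w w' assume w: "w \<in> h ` V0 \<inter> h ` V1" and w': "w' \<in> h ` V0 \<inter> h ` V1" and ne: "w \<noteq> w'"
    have inV: "\<And>u b. u \<in> h ` V0 \<inter> h ` V1 \<Longrightarrow> b < 2 \<Longrightarrow> u[z:=b] \<in> V"
    proof -
      fix u and b :: nat assume u: "u \<in> h ` V0 \<inter> h ` V1" and b: "b < 2"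
      obtain c0 where c0: "c0 \<in> V0" "u = h c0" using u by auto
      obtain c1 where c1: "c1 \<in> V1" "u = h c1" using u by auto
      have "c0 = u[z:=0]" using rec[of c0 0] c0 unfolding V0_def by auto
      moreover have "c1 = u[z:=1]" using rec[of c1 1] c1 unfolding V1_def by auto
      ultimately show "u[z:=b] \<in> V" using b c0 c1 unfolding V0_def V1_def
        by (cases b) (auto simp: numeral_2_eq_2 less_Suc_eq)
    qed
    have okw: "colok m Z w" "colok m Z w'" using okW w w' WU by auto
    then have "length w = m" "length w' = m" unfolding colok_def by auto
    then obtain k where k: "k < m" "w!k \<noteq> w'!k" using ne nth_equalityI by metis
    have kZ: "k \<in> Z" using okw k unfolding colok_def by auto
    have kz: "k \<noteq> z" using kZ insert.hyps(2) by auto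
    have lt: "w!k < 2" "w'!k < 2" using okw k kZ unfolding colok_def by auto
    obtain x y where xy: "x<2" "y<2" "\<forall>c\<in>V. \<not>(c!k = x \<and> c!z = y)"
      using insert.prems(4) kZ kz by (meson insertCI)
    have "x = w!k \<or> x = w'!k" using lt k(2) xy(1) by linarith
    then show False
    proof
      assume "x = w!k"
      then show False using xy(3) inV[OF w xy(2)] kz zm \<open>length w = m\<close> by auto
    next
      assume "x = w'!k"
      then show False using xy(3) inV[OF w' xy(2)] kz zm \<open>length w' = m\<close> by auto
    qed
  qed
  have "card V0 + card V1 = card (h ` V0) + card (h ` V1)"
    using card_image[OF inj0] card_image[OF inj1] by simp
  also have "\<dots> = card W + card (h ` V0 \<inter> h ` V1)"
    unfolding WU by (rule card_Un_Int) (use fin0 in auto)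
  finally have "card V \<le> card Z + 2" using cardV IH I1 by linarith
  then show ?case using insert.hyps(1,2) by simp
qed


lemma concat_rep_nth:
  "s < p * length xs \<Longrightarrow> concat (replicate p xs) ! s = xs ! (s mod length xs)"
proof (induction p arbitrary: s)
  case 0 then show ?case by simp
next
  case (Suc p)
  show ?case
  proof (cases "s < length xs")
    case True then show ?thesis by (simp add: nth_append)
  next
    case False
    then have "s - length xs < p * length xs" using Suc.prems by simp
    then show ?thesis using False Suc.IH[of "s - length xs"]
      by (simp add: nth_append le_mod_geq)
  qed
qed

lemma length_copiesK2: "length (copiesK2 p) = 4 * p"
  by (simp add: copiesK2_def K2_def length_concat sum_list_replicate)

lemma copiesK2_nth: "s < 4 * p \<Longrightarrow> copiesK2 p ! s = K2 ! (s mod 4)"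
  unfolding copiesK2_def using concat_rep_nth[of s p K2] by (simp add: K2_def mult.commute)

lemma K2_nth: "u < 4 \<Longrightarrow> K2 ! u ! 0 = u mod 2 \<and> K2 ! u ! 1 = u div 2"
  by (cases u; cases "u - 1"; cases "u - 2"; cases "u - 3") (auto simp: K2_def)

lemma card_idx:
  assumes "distinct A"
  shows "card {t. t < length A \<and> P (A!t)} = card {c\<in>set A. P c}"
proof -
  have "(\<lambda>t. A!t) ` {t. t < length A \<and> P (A!t)} = {c\<in>set A. P c}"
    by (auto simp: in_set_conv_nth)
  moreover have "inj_on (\<lambda>t. A!t) {t. t < length A \<and> P (A!t)}"
    using assms by (auto simp: inj_on_def nth_eq_iff_index_eq)
  ultimately show ?thesis by (metis card_image)
qed

lemma config_K2:
  assumes ij: "i \<noteq> j" "i < m" "j < m" and dA: "distinct A"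
    and big: "\<forall>x<2. \<forall>y<2. p \<le> card {c\<in>set A. c!i = x \<and> c!j = y}"
  shows "config 2 m (copiesK2 p) A"
proof -
  define T where "T x y = {t. t < length A \<and> A!t!i = x \<and> A!t!j = y}" for x y :: nat
  have cT: "p \<le> card (T x y)" if "x < 2" "y < 2" for x y
    using big that card_idx[OF dA, of "\<lambda>c. c!i = x \<and> c!j = y"] unfolding T_def by auto
  have exg: "\<exists>g. g ` {..<p} \<subseteq> T x y \<and> inj_on g {..<p}" if "x < 2" "y < 2" for x y
    using card_le_inj[of "{..<p}" "T x y"] cT[OF that] unfolding T_def by auto
  define G where "G x y = (SOME g. g ` {..<p} \<subseteq> T x y \<and> inj_on g {..<p})" for x y
  have G: "G x y ` {..<p} \<subseteq> T x y \<and> inj_on (G x y) {..<p}" if "x < 2" "y < 2" for x y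
    unfolding G_def using someI_ex[OF exg[OF that]] .
  define \<sigma> where "\<sigma> k = (if k = 0 then i else j)" for k :: nat
  define \<tau> where "\<tau> s = G (s mod 4 mod 2) (s mod 4 div 2) (s div 4)" for s
  have d2: "s mod 4 div 2 < 2" for s :: nat
    using less_mult_imp_div_less[of "s mod 4" 2 2] by simp
  have m2: "s mod 4 mod 2 < 2" for s :: nat by simp
  have tT: "\<tau> s \<in> T (s mod 4 mod 2) (s mod 4 div 2)" if "s < 4 * p" for s
  proof -
    have "s div 4 < p" using that by simp
    then show ?thesis unfolding \<tau>_def using G[OF m2 d2, of s] by auto
  qed
  show ?thesis unfolding config_def
  proof (intro exI conjI allI impI)
    show "inj_on \<sigma> {..<2}" using ij unfolding \<sigma>_def inj_on_def by auto
    show "\<And>k. k < 2 \<Longrightarrow> \<sigma> k < m" using ij unfolding \<sigma>_def by auto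
    show "inj_on \<tau> {..<length (copiesK2 p)}"
    proof (rule inj_onI)
      fix s s' assume s: "s \<in> {..<length (copiesK2 p)}" and s': "s' \<in> {..<length (copiesK2 p)}"
        and eq: "\<tau> s = \<tau> s'"
      have s4: "s < 4*p" "s' < 4*p" using s s' by (auto simp: length_copiesK2)
      have "s mod 4 mod 2 = s' mod 4 mod 2 \<and> s mod 4 div 2 = s' mod 4 div 2"
        using tT[OF s4(1)] tT[OF s4(2)] eq unfolding T_def by auto
      then have m4: "s mod 4 = s' mod 4" by (metis div_mult_mod_eq)
      have "s div 4 < p" "s' div 4 < p" using s4 by auto
      then have "s div 4 = s' div 4"
        using G[OF m2 d2, of s] eq m4 unfolding \<tau>_def inj_on_def by auto
      then show "s = s'" using m4 by (metis div_mult_mod_eq)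
    qed
    show "\<And>s. s < length (copiesK2 p) \<Longrightarrow> \<tau> s < length A"
      using tT unfolding T_def by (auto simp: length_copiesK2)
    fix k s :: nat assume k: "k < 2" and s: "s < length (copiesK2 p)"
    have s4: "s < 4*p" using s by (simp add: length_copiesK2)
    have "s mod 4 < 4" by simp
    from K2_nth[OF this] tT[OF s4] k show "copiesK2 p ! s ! k = A ! \<tau> s ! \<sigma> k"
      unfolding copiesK2_nth[OF s4] T_def \<sigma>_def by (cases k) auto
  qed
qed


definition Ssum :: "nat \<Rightarrow> nat" where
  "Ssum m = (\<Sum>Z\<in>Pow {..<m}. card Z + 1)"

definition Pairs :: "nat \<Rightarrow> (nat \<times> nat) set" where
  "Pairs m = {(i,j). i < j \<and> j < m}"

lemma finite_Pairs: "finite (Pairs m)"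
  by (rule finite_subset[of _ "{..<m} \<times> {..<m}"]) (auto simp: Pairs_def)

lemma ub:
  assumes sm: "is_smatrix m 3 A" and si: "simple A" and nc: "\<not> config 2 m (copiesK2 p) A"
  shows "length A \<le> Ssum m + (p - 1) * card (Pairs m)"
proof -
  have dA: "distinct A" using si by (simp add: simple_def)
  have colA: "\<And>c. c \<in> set A \<Longrightarrow> length c = m \<and> (\<forall>k<m. c!k < 3)"
    using sm unfolding is_smatrix_def by (metis nth_mem)
  define Q where "Q i j x y = {c\<in>set A. c!i = x \<and> c!j = y}" for i j x y :: nat
  have ex: "\<exists>xy. fst xy < 2 \<and> snd xy < 2 \<and> card (Q i j (fst xy) (snd xy)) < p"
    if "(i,j) \<in> Pairs m" for i j
  proof (rule ccontr)
    assume "\<not> ?thesis"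
    note nt = this
    have "\<forall>x<2. \<forall>y<2. p \<le> card {c\<in>set A. c!i = x \<and> c!j = y}"
    proof (intro allI impI)
      fix x y :: nat assume "x < 2" "y < 2"
      moreover have "\<not> (fst (x,y) < 2 \<and> snd (x,y) < 2 \<and> card (Q i j (fst (x,y)) (snd (x,y))) < p)"
        using nt by blast
      ultimately show "p \<le> card {c\<in>set A. c!i = x \<and> c!j = y}" unfolding Q_def by auto
    qed
    then have "config 2 m (copiesK2 p) A" using that dA config_K2[of i j m A p]
      by (auto simp: Pairs_def)
    then show False using nc by simp
  qed
  define d where "d i j = (SOME xy. fst xy < 2 \<and> snd xy < 2 \<and> card (Q i j (fst xy) (snd xy)) < p)" for i j
  have dP: "fst (d i j) < 2 \<and> snd (d i j) < 2 \<and> card (Q i j (fst (d i j)) (snd (d i j))) < p"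
    if "(i,j) \<in> Pairs m" for i j
    unfolding d_def using someI_ex[OF ex[OF that]] .
  define R where "R = (\<Union>ij\<in>Pairs m. Q (fst ij) (snd ij) (fst (d (fst ij) (snd ij))) (snd (d (fst ij) (snd ij))))"
  have "card R \<le> (\<Sum>ij\<in>Pairs m. card (Q (fst ij) (snd ij) (fst (d (fst ij) (snd ij))) (snd (d (fst ij) (snd ij)))))"
    unfolding R_def by (rule card_UN_le[OF finite_Pairs])
  also have "\<dots> \<le> (\<Sum>ij\<in>Pairs m. p - 1)"
  proof (rule sum_mono)
    fix ij assume "ij \<in> Pairs m"
    then show "card (Q (fst ij) (snd ij) (fst (d (fst ij) (snd ij))) (snd (d (fst ij) (snd ij)))) \<le> p - 1"
      using dP[of "fst ij" "snd ij"] by auto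
  qed
  finally have cR: "card R \<le> (p - 1) * card (Pairs m)" by (simp add: mult.commute)
  define A' where "A' = set A - R"
  have "set A \<subseteq> A' \<union> R" unfolding A'_def by auto
  have fR: "finite R" unfolding R_def Q_def by (intro finite_UN_I finite_Pairs) auto
  have fA': "finite A'" unfolding A'_def by auto
  have "card (set A) \<le> card (A' \<union> R)" by (rule card_mono) (use fR fA' \<open>set A \<subseteq> A' \<union> R\<close> in auto)
  also have "\<dots> \<le> card A' + card R" by (rule card_Un_le)
  finally have c1: "card (set A) \<le> card A' + card R" .
  define V where "V Z = {c\<in>A'. Z = {k. k < m \<and> c!k \<noteq> 2}}" for Z
  have "A' \<subseteq> (\<Union>Z\<in>Pow {..<m}. V Z)"
  proof
    fix c assume c: "c \<in> A'"
    then have "c \<in> V {k. k < m \<and> c!k \<noteq> 2}" unfolding V_def by simp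
    moreover have "{k. k < m \<and> c!k \<noteq> 2} \<in> Pow {..<m}" by auto
    ultimately show "c \<in> (\<Union>Z\<in>Pow {..<m}. V Z)" by blast
  qed
  moreover have "finite (\<Union>Z\<in>Pow {..<m}. V Z)"
    by (rule finite_UN_I) (auto simp: V_def A'_def)
  ultimately have "card A' \<le> card (\<Union>Z\<in>Pow {..<m}. V Z)"
    by (intro card_mono)
  also have "\<dots> \<le> (\<Sum>Z\<in>Pow {..<m}. card (V Z))" by (rule card_UN_le) simp
  also have "\<dots> \<le> (\<Sum>Z\<in>Pow {..<m}. card Z + 1)"
  proof (rule sum_mono)
    fix Z assume Z: "Z \<in> Pow {..<m}"
    have fZ: "finite Z" using Z finite_subset by auto
    show "card (V Z) \<le> card Z + 1"
    proof (rule sauer[OF fZ])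
      show "finite (V Z)" unfolding V_def A'_def by auto
      show "Z \<subseteq> {..<m}" using Z by auto
      show "\<forall>c\<in>V Z. colok m Z c"
      proof
        fix c assume "c \<in> V Z"
        then have "c \<in> set A" "Z = {k. k < m \<and> c!k \<noteq> 2}" unfolding V_def A'_def by auto
        then show "colok m Z c" using colA[of c] unfolding colok_def by force
      qed
      show "\<forall>i\<in>Z. \<forall>j\<in>Z. i \<noteq> j \<longrightarrow> (\<exists>x<2. \<exists>y<2. \<forall>c\<in>V Z. \<not> (c ! i = x \<and> c ! j = y))"
      proof (intro ballI impI)
        fix i j assume ij: "i \<in> Z" "j \<in> Z" "i \<noteq> j"
        have notR: "\<not>(c!a = fst (d a b) \<and> c!b = snd (d a b))" if "c \<in> V Z" "(a,b) \<in> Pairs m" for c a b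
        proof
          assume h: "c!a = fst (d a b) \<and> c!b = snd (d a b)"
          have "c \<in> set A" "c \<notin> R" using that(1) unfolding V_def A'_def by auto
          then have "c \<in> Q a b (fst (d a b)) (snd (d a b))" using h unfolding Q_def by auto
          then have "c \<in> R" unfolding R_def using that(2) by force
          then show False using \<open>c \<notin> R\<close> by simp
        qed
        show "\<exists>x<2. \<exists>y<2. \<forall>c\<in>V Z. \<not> (c ! i = x \<and> c ! j = y)"
        proof (cases "i < j")
          case True
          then have P: "(i,j) \<in> Pairs m" using ij Z by (auto simp: Pairs_def)
          show ?thesis using dP[OF P] notR[OF _ P] by blast
        next
          case False
          then have P: "(j,i) \<in> Pairs m" using ij Z by (auto simp: Pairs_def)
          show ?thesis using dP[OF P] notR[OF _ P] by blast
        qed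
      qed
    qed
  qed
  finally have "card A' \<le> Ssum m" unfolding Ssum_def .
  then show ?thesis using c1 cR distinct_card[OF dA] by linarith
qed


definition viol :: "nat \<Rightarrow> nat \<Rightarrow> nat \<Rightarrow> nat list \<Rightarrow> nat \<Rightarrow> nat \<Rightarrow> bool" where
  "viol m l rr c i j \<longleftrightarrow> (j < l \<and> c!i = 0 \<and> c!j = 0) \<or> (m - rr \<le> i \<and> c!i = 1 \<and> c!j = 1)
     \<or> (\<not> j < l \<and> \<not> m - rr \<le> i \<and> c!i = 0 \<and> c!j = 1)"

definition bv :: "nat \<Rightarrow> nat \<Rightarrow> nat \<Rightarrow> nat set \<Rightarrow> nat option \<Rightarrow> nat \<Rightarrow> nat" where
  "bv m l rr Z x k = (if k \<notin> Z then 2 else if k < l then (if x = Some k then 0 else 1)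
     else if m - rr \<le> k then (if x = Some k then 1 else 0)
     else (if (\<exists>y. x = Some y \<and> k \<le> y) then 1 else 0))"

definition basecol :: "nat \<Rightarrow> nat \<Rightarrow> nat \<Rightarrow> nat set \<Rightarrow> nat option \<Rightarrow> nat list" where
  "basecol m l rr Z x = map (bv m l rr Z x) [0..<m]"

definition ev :: "nat \<Rightarrow> nat \<Rightarrow> nat \<Rightarrow> nat \<Rightarrow> nat \<Rightarrow> nat set \<Rightarrow> nat \<Rightarrow> nat" where
  "ev m l rr i j W k = (if k = i then (if m - rr \<le> i then 1 else 0)
     else if k = j then (if j < l then 0 else 1)
     else if k \<in> W then (if k < l then 1 else 0) else 2)"

definition extcol :: "nat \<Rightarrow> nat \<Rightarrow> nat \<Rightarrow> nat \<Rightarrow> nat \<Rightarrow> nat set \<Rightarrow> nat list" where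
  "extcol m l rr i j W = map (ev m l rr i j W) [0..<m]"

definition Oset :: "nat \<Rightarrow> nat \<Rightarrow> nat \<Rightarrow> nat \<Rightarrow> nat \<Rightarrow> nat set" where
  "Oset m l rr i j = {k. k < m \<and> (k < l \<or> m - rr \<le> k) \<and> k \<noteq> i \<and> k \<noteq> j}"

lemma basecol_nth: "k < m \<Longrightarrow> basecol m l rr Z x ! k = bv m l rr Z x k"
  by (simp add: basecol_def)

lemma extcol_nth: "k < m \<Longrightarrow> extcol m l rr i j W ! k = ev m l rr i j W k"
  by (simp add: extcol_def)

lemma base_noviol:
  assumes "i < j" "j < m" "l + rr \<le> m"
  shows "\<not> viol m l rr (basecol m l rr Z x) i j"
  using assms unfolding viol_def basecol_nth[OF less_trans[OF assms(1,2)]] basecol_nth[OF assms(2)] bv_def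
  by auto

lemma ext_viol:
  assumes "i < j" "j < m" "l + rr \<le> m" "W \<subseteq> Oset m l rr i j" "a < b" "b < m"
  shows "viol m l rr (extcol m l rr i j W) a b \<longleftrightarrow> (a = i \<and> b = j)"
  using assms unfolding viol_def extcol_nth[OF less_trans[OF assms(5,6)]] extcol_nth[OF assms(6)] ev_def Oset_def
  by (auto split: if_splits)


lemma bv_two: "bv m l rr Z x k = 2 \<longleftrightarrow> k \<notin> Z"
  unfolding bv_def by auto

lemma base_inj:
  assumes "x \<in> insert None (Some ` Z)" "x' \<in> insert None (Some ` Z)" "Z \<subseteq> {..<m}"
    and eq: "basecol m l rr Z x = basecol m l rr Z x'"
  shows "x = x'"
proof (rule ccontr)
  assume ne: "x \<noteq> x'"
  have "\<exists>k\<in>Z. bv m l rr Z x k \<noteq> bv m l rr Z x' k"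
  proof (cases x)
    case None
    then obtain y' where y': "x' = Some y'" "y' \<in> Z" using assms(2) ne by auto
    show ?thesis using None y' by (intro bexI[of _ y']) (auto simp: bv_def)
  next
    case (Some y)
    then have yZ: "y \<in> Z" using assms(1) by auto
    show ?thesis
    proof (cases x')
      case None
      show ?thesis using None Some yZ by (intro bexI[of _ y]) (auto simp: bv_def)
    next
      case (Some y')
      then have y'Z: "y' \<in> Z" using assms(2) by auto
      have yy: "y \<noteq> y'" using ne Some \<open>x = Some y\<close> by auto
      show ?thesis
      proof (cases "y < l \<or> m - rr \<le> y")
        case True
        show ?thesis using True yy Some \<open>x = Some y\<close> yZ by (intro bexI[of _ y]) (auto simp: bv_def)
      next
        case F1: False
        show ?thesis
        proof (cases "y' < l \<or> m - rr \<le> y'")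
          case True
          show ?thesis using True yy Some \<open>x = Some y\<close> y'Z by (intro bexI[of _ y']) (auto simp: bv_def)
        next
          case False
          show ?thesis
          proof (cases "y < y'")
            case True
            show ?thesis using True False F1 Some \<open>x = Some y\<close> y'Z by (intro bexI[of _ y']) (auto simp: bv_def)
          next
            case F2: False
            then have "y' < y" using yy by simp
            then show ?thesis using False F1 Some \<open>x = Some y\<close> yZ by (intro bexI[of _ y]) (auto simp: bv_def)
          qed
        qed
      qed
    qed
  qed
  then obtain k where k: "k \<in> Z" "bv m l rr Z x k \<noteq> bv m l rr Z x' k" by blast
  have "k < m" using k assms(3) by auto
  then show False using basecol_nth[OF \<open>k < m\<close>, of l rr Z x] basecol_nth[OF \<open>k < m\<close>, of l rr Z x'] eq k(2) by simp
qed

definition BZ :: "nat \<Rightarrow> nat \<Rightarrow> nat \<Rightarrow> nat set \<Rightarrow> nat list set" where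
  "BZ m l rr Z = basecol m l rr Z ` insert None (Some ` Z)"

definition Bset :: "nat \<Rightarrow> nat \<Rightarrow> nat \<Rightarrow> nat list set" where
  "Bset m l rr = (\<Union>Z\<in>Pow {..<m}. BZ m l rr Z)"

lemma card_BZ:
  assumes "Z \<subseteq> {..<m}"
  shows "card (BZ m l rr Z) = card Z + 1"
proof -
  have fZ: "finite Z" using assms finite_subset by auto
  have "inj_on (basecol m l rr Z) (insert None (Some ` Z))"
    using base_inj[OF _ _ assms] by (meson inj_onI)
  then have "card (BZ m l rr Z) = card (insert None (Some ` Z))" unfolding BZ_def by (rule card_image)
  also have "\<dots> = card Z + 1" using fZ by (simp add: card_image)
  finally show ?thesis .
qed

lemma BZ_zero: "c \<in> BZ m l rr Z \<Longrightarrow> Z \<subseteq> {..<m} \<Longrightarrow> Z = {k. k < m \<and> c!k \<noteq> 2}"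
proof -
  assume c: "c \<in> BZ m l rr Z" and Z: "Z \<subseteq> {..<m}"
  then obtain x where x: "c = basecol m l rr Z x" unfolding BZ_def by auto
  have "\<forall>k<m. (c!k \<noteq> 2) = (k \<in> Z)" unfolding x by (simp add: basecol_nth bv_two)
  then show ?thesis using Z by blast
qed

lemma card_Bset: "card (Bset m l rr) = Ssum m"
proof -
  have "card (Bset m l rr) = (\<Sum>Z\<in>Pow {..<m}. card (BZ m l rr Z))"
    unfolding Bset_def
  proof (rule card_UN_disjoint)
    show "finite (Pow {..<m::nat})" by simp
    show "\<forall>Z\<in>Pow {..<m}. finite (BZ m l rr Z)"
    proof
      fix Z assume "Z \<in> Pow {..<m}"
      then have "finite Z" using finite_subset by auto
      then show "finite (BZ m l rr Z)" unfolding BZ_def by simp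
    qed
    show "\<forall>Z\<in>Pow {..<m}. \<forall>Z'\<in>Pow {..<m}. Z \<noteq> Z' \<longrightarrow> BZ m l rr Z \<inter> BZ m l rr Z' = {}"
    proof (intro ballI impI)
      fix Z Z' assume Z: "Z \<in> Pow {..<m}" and Z': "Z' \<in> Pow {..<m}" and ne: "Z \<noteq> Z'"
      show "BZ m l rr Z \<inter> BZ m l rr Z' = {}"
      proof (rule ccontr)
        assume "BZ m l rr Z \<inter> BZ m l rr Z' \<noteq> {}"
        then obtain c where c1: "c \<in> BZ m l rr Z" and c2: "c \<in> BZ m l rr Z'" by blast
        have "Z \<subseteq> {..<m}" "Z' \<subseteq> {..<m}" using Z Z' by auto
        then have "Z = {k. k < m \<and> c!k \<noteq> 2}" "Z' = {k. k < m \<and> c!k \<noteq> 2}"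
          using BZ_zero[OF c1] BZ_zero[OF c2] by auto
        then show False using ne by simp
      qed
    qed
  qed
  also have "\<dots> = Ssum m" unfolding Ssum_def by (rule sum.cong) (auto simp: card_BZ)
  finally show ?thesis .
qed

lemma Bset_noviol: "c \<in> Bset m l rr \<Longrightarrow> i < j \<Longrightarrow> j < m \<Longrightarrow> l + rr \<le> m \<Longrightarrow> \<not> viol m l rr c i j"
  unfolding Bset_def BZ_def using base_noviol by blast

lemma Bset_col: "c \<in> Bset m l rr \<Longrightarrow> length c = m \<and> (\<forall>x\<in>set c. x < 3)"
proof -
  assume "c \<in> Bset m l rr"
  then obtain Z x where x: "c = basecol m l rr Z x" unfolding Bset_def BZ_def by auto
  have "\<forall>k. bv m l rr Z x k < 3" by (simp add: bv_def)
  then show ?thesis unfolding x by (simp add: basecol_def)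
qed

lemma ext_inj:
  assumes "W \<subseteq> Oset m l rr i j" "W' \<subseteq> Oset m l rr i j" "extcol m l rr i j W = extcol m l rr i j W'"
  shows "W = W'"
proof -
  have key: "{k. k < m \<and> extcol m l rr i j W ! k \<noteq> 2} - {i, j} = W"
    if "W \<subseteq> Oset m l rr i j" for W
  proof -
    have "{k. k < m \<and> extcol m l rr i j W ! k \<noteq> 2} = {k. k < m \<and> ev m l rr i j W k \<noteq> 2}"
      by (rule Collect_cong) (auto simp: extcol_nth)
    also have "\<dots> - {i, j} = W"
    proof (intro set_eqI iffI)
      fix k assume "k \<in> {k. k < m \<and> ev m l rr i j W k \<noteq> 2} - {i, j}"
      then have "k \<noteq> i" "k \<noteq> j" "ev m l rr i j W k \<noteq> 2" by auto
      then show "k \<in> W" unfolding ev_def by presburger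
    next
      fix k assume k: "k \<in> W"
      then have "k < m" "k \<noteq> i" "k \<noteq> j" using that unfolding Oset_def by auto
      then show "k \<in> {k. k < m \<and> ev m l rr i j W k \<noteq> 2} - {i, j}" using k by (simp add: ev_def)
    qed
    finally show ?thesis .
  qed
  have "W = {k. k < m \<and> extcol m l rr i j W ! k \<noteq> 2} - {i, j}" using key[OF assms(1)] by simp
  also have "\<dots> = {k. k < m \<and> extcol m l rr i j W' ! k \<noteq> 2} - {i, j}" unfolding assms(3) ..
  also have "\<dots> = W'" using key[OF assms(2)] .
  finally show ?thesis .
qed

lemma ext_col: "length (extcol m l rr i j W) = m \<and> (\<forall>x\<in>set (extcol m l rr i j W). x < 3)"
proof -
  have "\<forall>k. ev m l rr i j W k < 3" by (simp add: ev_def)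
  then show ?thesis by (simp add: extcol_def)
qed


definition bud :: "nat \<Rightarrow> nat \<Rightarrow> nat \<Rightarrow> nat \<Rightarrow> nat \<Rightarrow> nat \<Rightarrow> nat \<Rightarrow> nat" where
  "bud m l rr p q i j = (if j < l \<or> m - rr \<le> i then p - q - 1 else p - 1)"

definition Ws :: "nat \<Rightarrow> nat \<Rightarrow> nat \<Rightarrow> nat \<Rightarrow> nat \<Rightarrow> nat \<Rightarrow> nat \<Rightarrow> nat set set" where
  "Ws m l rr p q i j = (SOME T. T \<subseteq> Pow (Oset m l rr i j) \<and> card T = bud m l rr p q i j)"

definition Eset :: "nat \<Rightarrow> nat \<Rightarrow> nat \<Rightarrow> nat \<Rightarrow> nat \<Rightarrow> nat \<Rightarrow> nat \<Rightarrow> nat list set" where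
  "Eset m l rr p q i j = extcol m l rr i j ` Ws m l rr p q i j"

definition Cset :: "nat \<Rightarrow> nat \<Rightarrow> nat \<Rightarrow> nat \<Rightarrow> nat \<Rightarrow> nat list set" where
  "Cset m l rr p q = Bset m l rr \<union> (\<Union>ij\<in>Pairs m. Eset m l rr p q (fst ij) (snd ij))"

lemma finite_Oset: "finite (Oset m l rr i j)"
  unfolding Oset_def by auto

lemma Ws_prop:
  assumes "bud m l rr p q i j \<le> 2 ^ card (Oset m l rr i j)"
  shows "Ws m l rr p q i j \<subseteq> Pow (Oset m l rr i j) \<and> card (Ws m l rr p q i j) = bud m l rr p q i j"
proof -
  have "bud m l rr p q i j \<le> card (Pow (Oset m l rr i j))"
    using assms card_Pow[OF finite_Oset] by simp
  then obtain T where "T \<subseteq> Pow (Oset m l rr i j)" "card T = bud m l rr p q i j"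
    by (rule obtain_subset_with_card_n)
  then have "\<exists>T. T \<subseteq> Pow (Oset m l rr i j) \<and> card T = bud m l rr p q i j" by blast
  then show ?thesis unfolding Ws_def by (rule someI_ex)
qed

lemma card_Eset:
  assumes "bud m l rr p q i j \<le> 2 ^ card (Oset m l rr i j)"
  shows "card (Eset m l rr p q i j) = bud m l rr p q i j"
proof -
  have W: "Ws m l rr p q i j \<subseteq> Pow (Oset m l rr i j)" "card (Ws m l rr p q i j) = bud m l rr p q i j"
    using Ws_prop[OF assms] by auto
  have "inj_on (extcol m l rr i j) (Ws m l rr p q i j)"
  proof (rule inj_onI)
    fix W W' assume "W \<in> Ws m l rr p q i j" "W' \<in> Ws m l rr p q i j" "extcol m l rr i j W = extcol m l rr i j W'"
    moreover have "W \<subseteq> Oset m l rr i j" "W' \<subseteq> Oset m l rr i j" using W(1) calculation by auto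
    ultimately show "W = W'" using ext_inj by metis
  qed
  then show ?thesis unfolding Eset_def using W(2) by (simp add: card_image)
qed

lemma Eset_viol:
  assumes "bud m l rr p q i j \<le> 2 ^ card (Oset m l rr i j)" "(i,j) \<in> Pairs m" "l + rr \<le> m"
    "c \<in> Eset m l rr p q i j" "a < b" "b < m"
  shows "viol m l rr c a b \<longleftrightarrow> (a = i \<and> b = j)"
proof -
  obtain W where W: "W \<in> Ws m l rr p q i j" "c = extcol m l rr i j W" using assms(4) unfolding Eset_def by auto
  have "W \<subseteq> Oset m l rr i j" using W(1) Ws_prop[OF assms(1)] by auto
  moreover have "i < j" "j < m" using assms(2) by (auto simp: Pairs_def)
  ultimately show ?thesis using ext_viol[of i j m l rr W a b] assms(3,5,6) W(2) by simp
qed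


locale cons =
  fixes m l rr p q :: nat
  assumes lr: "l + rr \<le> m"
    and budok: "\<And>i j. (i,j) \<in> Pairs m \<Longrightarrow> bud m l rr p q i j \<le> 2 ^ card (Oset m l rr i j)"
begin

lemma Eset_fin: "(i,j) \<in> Pairs m \<Longrightarrow> finite (Eset m l rr p q i j)"
proof -
  assume P: "(i,j) \<in> Pairs m"
  have "Ws m l rr p q i j \<subseteq> Pow (Oset m l rr i j)" using Ws_prop[OF budok[OF P]] by simp
  then have "finite (Ws m l rr p q i j)" using finite_Oset finite_subset by blast
  then show ?thesis unfolding Eset_def by simp
qed

lemma Eset_disj:
  assumes "ij \<in> Pairs m" "ij' \<in> Pairs m" "ij \<noteq> ij'"
  shows "Eset m l rr p q (fst ij) (snd ij) \<inter> Eset m l rr p q (fst ij') (snd ij') = {}"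
proof (rule ccontr)
  assume "\<not> ?thesis"
  then obtain c where c: "c \<in> Eset m l rr p q (fst ij) (snd ij)" "c \<in> Eset m l rr p q (fst ij') (snd ij')" by blast
  have P: "(fst ij, snd ij) \<in> Pairs m" "(fst ij', snd ij') \<in> Pairs m" using assms by auto
  have lt: "fst ij < snd ij" "snd ij < m" using P(1) by (auto simp: Pairs_def)
  have "viol m l rr c (fst ij) (snd ij)" using Eset_viol[OF budok[OF P(1)] P(1) lr c(1) lt] by simp
  then have "fst ij = fst ij' \<and> snd ij = snd ij'" using Eset_viol[OF budok[OF P(2)] P(2) lr c(2) lt] by simp
  then show False using assms(3) by (simp add: prod_eq_iff)
qed

lemma card_Cset: "card (Cset m l rr p q) = Ssum m + (\<Sum>ij\<in>Pairs m. bud m l rr p q (fst ij) (snd ij))"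
proof -
  have fB: "finite (Bset m l rr)"
  proof -
    have "Bset m l rr \<subseteq> {c. length c = m \<and> set c \<subseteq> {..<3}}" using Bset_col by auto
    moreover have "finite {c::nat list. length c = m \<and> set c \<subseteq> {..<3}}"
      using finite_lists_length_eq[of "{..<3::nat}" m] by (simp add: conj_commute)
    ultimately show ?thesis by (rule finite_subset)
  qed
  have fE: "finite (\<Union>ij\<in>Pairs m. Eset m l rr p q (fst ij) (snd ij))"
    using Eset_fin finite_Pairs by auto
  have disj: "Bset m l rr \<inter> (\<Union>ij\<in>Pairs m. Eset m l rr p q (fst ij) (snd ij)) = {}"
  proof (rule ccontr)
    assume "\<not> ?thesis"
    then obtain c ij where c: "c \<in> Bset m l rr" "ij \<in> Pairs m" "c \<in> Eset m l rr p q (fst ij) (snd ij)" by blast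
    have P: "(fst ij, snd ij) \<in> Pairs m" using c(2) by auto
    have lt: "fst ij < snd ij" "snd ij < m" using P by (auto simp: Pairs_def)
    have "viol m l rr c (fst ij) (snd ij)" using Eset_viol[OF budok[OF P] P lr c(3) lt] by simp
    then show False using Bset_noviol[OF c(1) lt lr] by simp
  qed
  have "card (Cset m l rr p q) = card (Bset m l rr) + card (\<Union>ij\<in>Pairs m. Eset m l rr p q (fst ij) (snd ij))"
    unfolding Cset_def using fB fE disj by (rule card_Un_disjoint)
  also have "card (\<Union>ij\<in>Pairs m. Eset m l rr p q (fst ij) (snd ij)) = (\<Sum>ij\<in>Pairs m. card (Eset m l rr p q (fst ij) (snd ij)))"
    by (rule card_UN_disjoint) (use finite_Pairs Eset_fin Eset_disj in auto)
  also have "\<dots> = (\<Sum>ij\<in>Pairs m. bud m l rr p q (fst ij) (snd ij))"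
    by (rule sum.cong) (use card_Eset budok in auto)
  finally show ?thesis using card_Bset by simp
qed

lemma Cset_col: "c \<in> Cset m l rr p q \<Longrightarrow> length c = m \<and> (\<forall>x\<in>set c. x < 3)"
  unfolding Cset_def Eset_def using Bset_col ext_col by auto

lemma Cset_viol:
  assumes P: "(i,j) \<in> Pairs m"
  shows "card {c\<in>Cset m l rr p q. viol m l rr c i j} \<le> bud m l rr p q i j"
proof -
  have lt: "i < j" "j < m" using P by (auto simp: Pairs_def)
  have "{c\<in>Cset m l rr p q. viol m l rr c i j} \<subseteq> Eset m l rr p q i j"
  proof
    fix c assume c: "c \<in> {c\<in>Cset m l rr p q. viol m l rr c i j}"
    then have v: "viol m l rr c i j" by simp
    have "c \<notin> Bset m l rr" using Bset_noviol[OF _ lt lr] v by blast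
    then obtain ij where ij: "ij \<in> Pairs m" "c \<in> Eset m l rr p q (fst ij) (snd ij)"
      using c unfolding Cset_def by blast
    have P': "(fst ij, snd ij) \<in> Pairs m" using ij(1) by auto
    have "i = fst ij \<and> j = snd ij" using Eset_viol[OF budok[OF P'] P' lr ij(2) lt] v by simp
    then show "c \<in> Eset m l rr p q i j" using ij(2) by simp
  qed
  then have "card {c\<in>Cset m l rr p q. viol m l rr c i j} \<le> card (Eset m l rr p q i j)"
    by (rule card_mono[OF Eset_fin[OF P]])
  then show ?thesis using card_Eset[OF budok[OF P]] by simp
qed

end


lemma Fmat_nth:
  "s < a + b + c + d \<Longrightarrow> Fmat a b c d ! s =
    (if s < a then [0,0] else if s < a + b then [1,0] else if s < a + b + c then [0,1] else [1,1])"
  by (auto simp: Fmat_def nth_append)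

lemma length_Fmat: "length (Fmat a b c d) = a + b + c + d"
  by (simp add: Fmat_def)

lemma count_cols:
  assumes "inj_on \<tau> J" "\<forall>s\<in>J. \<tau> s < length A" "distinct A" "\<forall>s\<in>J. P (A ! (\<tau> s))"
  shows "card J \<le> card {c\<in>set A. P c}"
proof (rule card_inj_on_le[of "\<lambda>s. A ! (\<tau> s)"])
  show "inj_on (\<lambda>s. A ! \<tau> s) J"
  proof (rule inj_onI)
    fix s s' assume sJ: "s \<in> J" "s' \<in> J" and eq: "A ! \<tau> s = A ! \<tau> s'"
    have lt: "\<tau> s < length A" "\<tau> s' < length A" using assms(2) sJ by auto
    have "\<tau> s = \<tau> s'" using nth_eq_iff_index_eq[OF assms(3) lt] eq by simp
    from inj_onD[OF assms(1) this sJ] show "s = s'" .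
  qed
  show "(\<lambda>s. A ! \<tau> s) ` J \<subseteq> {c \<in> set A. P c}" using assms(2,4) by auto
  show "finite {c \<in> set A. P c}" by simp
qed

context cons begin

lemma avoid:
  assumes qp: "q < p" and sA: "set A = Cset m l rr p q" and dA: "distinct A"
  shows "\<not> config 2 m (Fmat (p - q) p p (p - q)) A"
proof
  assume "config 2 m (Fmat (p - q) p p (p - q)) A"
  then obtain \<sigma> \<tau> where s1: "inj_on \<sigma> {..<2}" and s2: "\<forall>i<2. \<sigma> i < m"
    and t1: "inj_on \<tau> {..<length (Fmat (p - q) p p (p - q))}"
    and t2: "\<forall>j<length (Fmat (p - q) p p (p - q)). \<tau> j < length A"
    and e: "\<forall>i<2. \<forall>j<length (Fmat (p - q) p p (p - q)). Fmat (p - q) p p (p - q) ! j ! i = A ! (\<tau> j) ! (\<sigma> i)"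
  proof -
    from \<open>config 2 m (Fmat (p - q) p p (p - q)) A\<close>[unfolded config_def]
    obtain \<sigma> \<tau> where "inj_on \<sigma> {..<2} \<and> (\<forall>i<2. \<sigma> i < m) \<and>
            inj_on \<tau> {..<length (Fmat (p - q) p p (p - q))} \<and> (\<forall>j<length (Fmat (p - q) p p (p - q)). \<tau> j < length A) \<and>
            (\<forall>i<2. \<forall>j<length (Fmat (p - q) p p (p - q)). Fmat (p - q) p p (p - q) ! j ! i = A ! (\<tau> j) ! (\<sigma> i))"
      by (elim exE)
    then show ?thesis using that by blast
  qed
  define F where "F = Fmat (p - q) p p (p - q)"
  define i0 where "i0 = \<sigma> 0"
  define i1 where "i1 = \<sigma> 1"
  have lenF: "length F = 4 * p - 2 * q" unfolding F_def length_Fmat using qp by simp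
  have ne: "i0 \<noteq> i1"
  proof
    assume "i0 = i1"
    then have "\<sigma> 0 = \<sigma> 1" unfolding i0_def i1_def .
    from inj_onD[OF s1 this] show False by simp
  qed
  have im: "i0 < m" "i1 < m" using s2 unfolding i0_def i1_def by auto
  have e0: "A ! (\<tau> s) ! i0 = F ! s ! 0" "A ! (\<tau> s) ! i1 = F ! s ! 1" if "s < length F" for s
    using e[rule_format, of 0 s] e[rule_format, of 1 s] that unfolding F_def i0_def i1_def by simp_all
  define i where "i = min i0 i1"
  define j where "j = max i0 i1"
  have ij01: "i0 < i1 \<Longrightarrow> i = i0 \<and> j = i1" "i1 < i0 \<Longrightarrow> i = i1 \<and> j = i0"
    unfolding i_def j_def by auto
  have P: "(i, j) \<in> Pairs m"
  proof (cases "i0 < i1")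
    case True then show ?thesis using ij01(1) im by (simp add: Pairs_def)
  next
    case False then have "i1 < i0" using ne by simp
    then show ?thesis using ij01(2) im by (simp add: Pairs_def)
  qed
  have key: "card J \<le> bud m l rr p q i j"
    if J: "J \<subseteq> {..<length F}" and V: "\<forall>s\<in>J. viol m l rr (A ! (\<tau> s)) i j" for J
  proof -
    have "card J \<le> card {c\<in>set A. viol m l rr c i j}"
      by (rule count_cols[OF inj_on_subset[OF t1] _ dA V]) (use J t2 F_def in auto)
    also have "\<dots> \<le> bud m l rr p q i j" using Cset_viol[OF P] sA by simp
    finally show ?thesis .
  qed
  have Fv: "F ! s = (if s < p - q then [0,0] else if s < p - q + p then [1,0] else if s < p - q + p + p then [0,1] else [1,1])"
    if "s < length F" for s
  proof -
    have "s < (p - q) + p + p + (p - q)" using that lenF qp by simp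
    from Fmat_nth[OF this] show ?thesis unfolding F_def .
  qed
  show False
  proof (cases "j < l")
    case True
    have "card {..<p - q} \<le> bud m l rr p q i j"
    proof (rule key)
      show "{..<p - q} \<subseteq> {..<length F}" using lenF by auto
      show "\<forall>s\<in>{..<p - q}. viol m l rr (A ! \<tau> s) i j"
      proof
        fix s assume s: "s \<in> {..<p - q}"
        then have sl: "s < length F" using lenF by auto
        have "F ! s = [0,0]" using Fv[OF sl] s by auto
        then have "A ! (\<tau> s) ! i0 = 0" "A ! (\<tau> s) ! i1 = 0" using e0[OF sl] by auto
        then show "viol m l rr (A ! \<tau> s) i j" using True unfolding viol_def i_def j_def
          using ij01 ne by (cases "i0 < i1") auto
      qed
    qed
    then show False using True qp unfolding bud_def by auto
  next
    case nL: False
    show False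
    proof (cases "m - rr \<le> i")
      case True
      have "card {p - q + p + p..<length F} \<le> bud m l rr p q i j"
      proof (rule key)
        show "{p - q + p + p..<length F} \<subseteq> {..<length F}" using lenF by auto
        show "\<forall>s\<in>{p - q + p + p..<length F}. viol m l rr (A ! \<tau> s) i j"
        proof
          fix s assume s: "s \<in> {p - q + p + p..<length F}"
          then have sl: "s < length F" using lenF by auto
          have "F ! s = [1,1]" using Fv[OF sl] s qp by auto
          then have "A ! (\<tau> s) ! i0 = 1" "A ! (\<tau> s) ! i1 = 1" using e0[OF sl] by auto
          then show "viol m l rr (A ! \<tau> s) i j" using True unfolding viol_def i_def j_def
            using ij01 ne by (cases "i0 < i1") auto
        qed
      qed
      then show False using True qp lenF unfolding bud_def by auto
    next
      case nR: False
      have bp: "bud m l rr p q i j = p - 1" using nL nR unfolding bud_def by auto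
      show False
      proof (cases "i0 < i1")
        case True
        have "card {p - q + p..<p - q + p + p} \<le> bud m l rr p q i j"
        proof (rule key)
          show "{p - q + p..<p - q + p + p} \<subseteq> {..<length F}" using lenF qp by auto
          show "\<forall>s\<in>{p - q + p..<p - q + p + p}. viol m l rr (A ! \<tau> s) i j"
          proof
            fix s assume s: "s \<in> {p - q + p..<p - q + p + p}"
            then have sl: "s < length F" using lenF qp by auto
            have "F ! s = [0,1]" using Fv[OF sl] s qp by auto
            then have "A ! (\<tau> s) ! i0 = 0" "A ! (\<tau> s) ! i1 = 1" using e0[OF sl] by auto
            then show "viol m l rr (A ! \<tau> s) i j" using True nL nR unfolding viol_def i_def j_def
              using ij01 ne by auto
          qed
        qed
        then show False using bp qp by auto
      next
        case False
        then have lt: "i1 < i0" using ne by simp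
        have "card {p - q..<p - q + p} \<le> bud m l rr p q i j"
        proof (rule key)
          show "{p - q..<p - q + p} \<subseteq> {..<length F}" using lenF qp by auto
          show "\<forall>s\<in>{p - q..<p - q + p}. viol m l rr (A ! \<tau> s) i j"
          proof
            fix s assume s: "s \<in> {p - q..<p - q + p}"
            then have sl: "s < length F" using lenF qp by auto
            have "F ! s = [1,0]" using Fv[OF sl] s qp by auto
            then have "A ! (\<tau> s) ! i0 = 1" "A ! (\<tau> s) ! i1 = 0" using e0[OF sl] by auto
            then show "viol m l rr (A ! \<tau> s) i j" using lt nL nR unfolding viol_def i_def j_def
              using ij01 ne by auto
          qed
        qed
        then show False using bp qp by auto
      qed
    qed
  qed
qed

end


lemma choose2_ge: "n - 1 \<le> n choose 2"
proof (cases n)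
  case 0 then show ?thesis by simp
next
  case (Suc k)
  have "Suc k choose 2 = (k choose 1) + (k choose 2)"
    by (metis Suc_1 binomial_Suc_Suc)
  then show ?thesis using Suc by simp
qed

lemma pairs_card: "card {(i,j). i < j \<and> j < (n::nat)} = n choose 2"
proof (induction n)
  case 0 then show ?case by simp
next
  case (Suc n)
  have eq: "{(i,j). i < j \<and> j < Suc n} = {(i,j). i < j \<and> j < n} \<union> (\<lambda>i. (i, n)) ` {..<n}"
    by auto
  have fin: "finite {(i,j). i < j \<and> j < (n::nat)}"
    by (rule finite_subset[of _ "{..<n} \<times> {..<n}"]) auto
  have "card {(i,j). i < j \<and> j < Suc n} = card {(i,j). i < j \<and> j < n} + card ((\<lambda>i. (i, n)) ` {..<n})"
    unfolding eq by (rule card_Un_disjoint) (use fin in auto)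
  also have "card ((\<lambda>i. (i, n)) ` {..<n}) = n" by (simp add: card_image inj_on_def)
  also have "Suc n choose 2 = (n choose 1) + (n choose 2)" by (metis Suc_1 binomial_Suc_Suc)
  ultimately show ?case using Suc.IH by simp
qed

lemma pairs_shift_card:
  assumes "rr \<le> m"
  shows "card {ij \<in> Pairs m. m - rr \<le> fst ij} \<le> rr choose 2"
proof -
  define s where "s = m - rr"
  have "{ij \<in> Pairs m. m - rr \<le> fst ij} \<subseteq> (\<lambda>(i,j). (i + s, j + s)) ` {(i,j). i < j \<and> j < rr}"
  proof
    fix ij assume ij: "ij \<in> {ij \<in> Pairs m. m - rr \<le> fst ij}"
    obtain i j where e: "ij = (i,j)" by force
    have h: "s \<le> i" "i < j" "j < m" using ij e unfolding Pairs_def s_def by auto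
    then have "(i - s, j - s) \<in> {(i,j). i < j \<and> j < rr}" using assms unfolding s_def by auto
    moreover have "ij = (\<lambda>(i,j). (i + s, j + s)) (i - s, j - s)" using e h by auto
    ultimately show "ij \<in> (\<lambda>(i,j). (i + s, j + s)) ` {(i,j). i < j \<and> j < rr}" by blast
  qed
  then have "card {ij \<in> Pairs m. m - rr \<le> fst ij} \<le> card ((\<lambda>(i,j). (i + s, j + s)) ` {(i,j). i < j \<and> j < rr})"
    by (rule card_mono[rotated]) (rule finite_imageI, rule finite_subset[of _ "{..<rr} \<times> {..<rr}"], auto)
  also have "\<dots> \<le> card {(i,j). i < j \<and> j < rr}" by (rule card_image_le) (rule finite_subset[of _ "{..<rr} \<times> {..<rr}"], auto)
  finally show ?thesis using pairs_card by simp
qed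

lemma pow_bound:
  assumes "p \<ge> 2" "r = nat \<lceil>log 2 (real (p - 1))\<rceil>"
  shows "p - 1 \<le> 2 ^ r"
proof -
  have p1: "real (p - 1) \<ge> 1" using assms(1) by simp
  have lg: "log 2 (real (p - 1)) \<ge> 0" using p1 by simp
  have "log 2 (real (p - 1)) \<le> real r" using assms(2) lg by linarith
  then have "2 powr log 2 (real (p - 1)) \<le> 2 powr real r" by (rule powr_mono) simp
  then have "real (p - 1) \<le> 2 ^ r" using p1 by (simp add: powr_realpow)
  then show ?thesis by (metis of_nat_le_iff of_nat_numeral of_nat_power)
qed


lemma forb_finite:
  "finite {length A | A. is_smatrix m s A \<and> simple A \<and> \<not> config k m F A}"
proof -
  define U where "U = {c::nat list. set c \<subseteq> {..<s} \<and> length c = m}"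
  have fU: "finite U" unfolding U_def by (rule finite_lists_length_eq) simp
  have "{length A | A. is_smatrix m s A \<and> simple A \<and> \<not> config k m F A} \<subseteq> {..card U}"
  proof
    fix n assume "n \<in> {length A | A. is_smatrix m s A \<and> simple A \<and> \<not> config k m F A}"
    then obtain A where A: "n = length A" "is_smatrix m s A" "simple A" by blast
    have "set A \<subseteq> U" using A(2) unfolding is_smatrix_def U_def by auto
    then have "card (set A) \<le> card U" using fU by (rule card_mono[rotated])
    moreover have "card (set A) = length A" using A(3) unfolding simple_def by (rule distinct_card)
    ultimately show "n \<in> {..card U}" using A(1) by simp
  qed
  then show ?thesis by (rule finite_subset) simp
qed

theorem mainTheorem13:
  fixes p q m r N :: nat
  assumes "p \<ge> 2"
    and "r = nat \<lceil>log 2 (real (p - 1))\<rceil>"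
    and "N = (((r + 1) div 2 + 1) choose 2) + ((r div 2 + 1) choose 2)"
    and "q \<le> p - 1"
    and "m \<ge> 2 * N + 2"
  shows "int (forb m 3 2 (Fmat (p - q) p p (p - q)))
           \<ge> int (forb m 3 2 (copiesK2 p)) - int q * int N"
proof -
  define l where "l = (r + 1) div 2 + 1"
  define rr where "rr = r div 2 + 1"
  have lrr: "l + rr = r + 2" unfolding l_def rr_def by simp
  have N: "N = (l choose 2) + (rr choose 2)" using assms(3) unfolding l_def rr_def by simp
  have "l - 1 \<le> l choose 2" "rr - 1 \<le> rr choose 2" by (rule choose2_ge)+
  then have "r \<le> N" using N lrr unfolding l_def rr_def by simp
  then have lm: "l + rr \<le> m" using lrr assms(5) by simp
  have pw: "p - 1 \<le> 2 ^ r" by (rule pow_bound[OF assms(1,2)])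
  have budok: "bud m l rr p q i j \<le> 2 ^ card (Oset m l rr i j)" if P: "(i,j) \<in> Pairs m" for i j
  proof -
    define S where "S = {..<l} \<union> {m - rr..<m}"
    have cS: "card S = l + rr" unfolding S_def using lm by (subst card_Un_disjoint) auto
    have "S - {i, j} \<subseteq> Oset m l rr i j" unfolding S_def Oset_def using lm by auto
    then have "card (S - {i, j}) \<le> card (Oset m l rr i j)" by (rule card_mono[OF finite_Oset])
    moreover have "card S \<le> card (S - {i, j}) + card {i, j}"
    proof -
      have fS: "finite S" unfolding S_def by simp
      have "card S \<le> card ((S - {i, j}) \<union> {i, j})" by (rule card_mono) (use fS in auto)
      also have "\<dots> \<le> card (S - {i, j}) + card {i, j}" by (rule card_Un_le)
      finally show ?thesis .
    qed
    moreover have "card {i, j} \<le> 2" by (simp add: card_insert_le_m1)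
    ultimately have "r \<le> card (Oset m l rr i j)" using cS lrr by linarith
    then have "(2::nat) ^ r \<le> 2 ^ card (Oset m l rr i j)" by (rule power_increasing) simp
    moreover have "bud m l rr p q i j \<le> p - 1" unfolding bud_def by auto
    ultimately show ?thesis using pw by linarith
  qed
  interpret cons m l rr p q using lm budok by unfold_locales auto
  have qp: "q < p" using assms(1,4) by simp
  have fC: "finite (Cset m l rr p q)"
  proof -
    have "Cset m l rr p q \<subseteq> {c. set c \<subseteq> {..<3} \<and> length c = m}" using Cset_col by auto
    moreover have "finite {c::nat list. set c \<subseteq> {..<3} \<and> length c = m}"
      by (rule finite_lists_length_eq) simp
    ultimately show ?thesis by (rule finite_subset)
  qed
  obtain A where A: "set A = Cset m l rr p q" "distinct A" using finite_distinct_list[OF fC] by blast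
  have smA: "is_smatrix m 3 A" unfolding is_smatrix_def using A(1) Cset_col by auto
  have siA: "simple A" unfolding simple_def using A(2) .
  have ncA: "\<not> config 2 m (Fmat (p - q) p p (p - q)) A" by (rule avoid[OF qp A])
  have lenA: "length A = Ssum m + (\<Sum>ij\<in>Pairs m. bud m l rr p q (fst ij) (snd ij))"
    using card_Cset A distinct_card by metis
  have f1: "length A \<le> forb m 3 2 (Fmat (p - q) p p (p - q))"
    unfolding forb_def by (rule Max_ge[OF forb_finite]) (use smA siA ncA in blast)
  have f2: "forb m 3 2 (copiesK2 p) \<le> Ssum m + (p - 1) * card (Pairs m)"
    unfolding forb_def
  proof (rule Max.boundedI[OF forb_finite])
    have "\<not> config 2 m (copiesK2 p) []"
    proof
      assume "config 2 m (copiesK2 p) []"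
      then obtain \<tau> where "\<forall>j<length (copiesK2 p). \<tau> j < length ([]::nat list list)"
        unfolding config_def by blast
      moreover have "0 < length (copiesK2 p)" using assms(1) by (simp add: length_copiesK2)
      ultimately show False by auto
    qed
    moreover have "is_smatrix m 3 []" "simple []" by (auto simp: is_smatrix_def simple_def)
    ultimately show "{length A |A. is_smatrix m 3 A \<and> simple A \<and> \<not> config 2 m (copiesK2 p) A} \<noteq> {}"
      by blast
  next
    fix n assume "n \<in> {length A |A. is_smatrix m 3 A \<and> simple A \<and> \<not> config 2 m (copiesK2 p) A}"
    then show "n \<le> Ssum m + (p - 1) * card (Pairs m)" using ub by blast
  qed
  define D where "D = {ij \<in> Pairs m. snd ij < l \<or> m - rr \<le> fst ij}"
  have fD: "finite D" unfolding D_def using finite_Pairs by simp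
  have sumeq: "(\<Sum>ij\<in>Pairs m. bud m l rr p q (fst ij) (snd ij)) + q * card D = (p - 1) * card (Pairs m)"
  proof -
    have "(\<Sum>ij\<in>Pairs m. bud m l rr p q (fst ij) (snd ij)) + (\<Sum>ij\<in>Pairs m. if ij \<in> D then q else 0)
        = (\<Sum>ij\<in>Pairs m. p - 1)"
      unfolding sum.distrib[symmetric]
      by (rule sum.cong) (use qp in \<open>auto simp: bud_def D_def\<close>)
    moreover have "(\<Sum>ij\<in>Pairs m. if ij \<in> D then q else 0) = q * card D"
    proof -
      have "(\<Sum>ij\<in>Pairs m. if ij \<in> D then q else 0) = (\<Sum>ij\<in>{ij \<in> Pairs m. ij \<in> D}. q)"
        using sum.inter_filter[OF finite_Pairs[of m], where g="\<lambda>_. q" and P="\<lambda>ij. ij \<in> D"] by simp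
      also have "{ij \<in> Pairs m. ij \<in> D} = D" unfolding D_def by auto
      finally show ?thesis by simp
    qed
    ultimately show ?thesis by (simp add: mult.commute)
  qed
  have cD: "card D \<le> N"
  proof -
    have "D \<subseteq> {(i,j). i < j \<and> j < l} \<union> {ij \<in> Pairs m. m - rr \<le> fst ij}"
      unfolding D_def Pairs_def by auto
    then have "card D \<le> card ({(i,j). i < j \<and> j < l} \<union> {ij \<in> Pairs m. m - rr \<le> fst ij})"
      by (rule card_mono[rotated]) (use finite_Pairs in \<open>auto intro: finite_subset[of _ "{..<l} \<times> {..<l}"]\<close>)
    also have "\<dots> \<le> card {(i,j). i < j \<and> j < l} + card {ij \<in> Pairs m. m - rr \<le> fst ij}"
      by (rule card_Un_le)
    also have "\<dots> \<le> (l choose 2) + (rr choose 2)"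
      using pairs_card[of l] pairs_shift_card[of rr m] lm by simp
    finally show ?thesis using N by simp
  qed
  have "q * card D \<le> q * N" using cD by simp
  then have nat: "forb m 3 2 (copiesK2 p) \<le> forb m 3 2 (Fmat (p - q) p p (p - q)) + q * N"
    using f1 f2 lenA sumeq by linarith
  have "int (forb m 3 2 (copiesK2 p)) \<le> int (forb m 3 2 (Fmat (p - q) p p (p - q)) + q * N)"
    using nat by (simp only: of_nat_le_iff)
  then show ?thesis by simp
qed

end
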